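(* Let $\mathcal{L}$ be a subspace of $\ell^2(G)$ containing $\mathcal{K}(G)$, and let $\|\cdot\|'$ be a norm on $\mathcal{L}$ such that $\|\,|f|\,\|' = \|f\|'$ for all $f\in\mathcal{K}(G)$. If $G$ (i.e. the pair $(G,1)$ with the trivial cocycle) has the $\mathcal{L}$-decay property with respect to $\|\cdot\|'$, then $(G,\sigma)$ has the $\mathcal{L}$-decay property with respect to $\|\cdot\|'$ for every normalized 2-cocycle $\sigma$.
   Context: $G$ is a discrete group with identity $e$, and $\sigma : G\times G \to \mathbb{T}$ is a normalized 2-cocycle, i.e. $\sigma(g,h)\sigma(gh,k)=\sigma(h,k)\sigma(g,hk)$ and $\sigma(g,e)=\sigma(e,g)=1$. $\Lambda_\sigma(g)$ is the unitary on $\ell^2(G)$ given by $(\Lambda_\sigma(g)\xi)(h)=\sigma(g,g^{-1}h)\xi(g^{-1}h)$; $\lambda=\Lambda_1$. $C^*_r(G,\sigma)$ is the operator-norm closed $*$-subalgebra of $B(\ell^2(G))$ generated by $\Lambda_\sigma(G)$. $\mathcal{K}(G)$ is the space of finitely supported complex functions on $G$; for $f\in\mathcal{K}(G)$, $\pi_\sigma(f)=\sum_{g}f(g)\Lambda_\sigma(g)$. For a finite $F\subseteq G$ and a function $\xi$, $\xi_F=\xi\chi_F$. If $\mathcal{L}\supseteq\mathcal{K}(G)$ is a subspace of $\ell^2(G)$ with a norm $\|\cdot\|'$, an element $\xi\in\mathcal{L}$ tends to $0$ at infinity w.r.t. $\|\cdot\|'$ if for every $\varepsilon>0$ there is a finite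 $F_0\subseteq G$ with $\|\xi_F\|'<\varepsilon$ for all finite $F$ disjoint from $F_0$. $(G,\sigma)$ has the $\mathcal{L}$-decay property w.r.t. $\|\cdot\|'$ if (i) every $\xi\in\mathcal{L}$ tends to $0$ at infinity w.r.t. $\|\cdot\|'$, and (ii) the map $f\mapsto\pi_\sigma(f)$ from $(\mathcal{K}(G),\|\cdot\|')$ to $(C^*_r(G,\sigma),\text{operator norm})$ is bounded. *)

theory Defs
  imports "HOL-Analysis.Analysis"
begin

text \<open>The discrete group G is modelled by a type 'g of class group_add,
  written additively: e = 0, gh = g + h, g^-1 = - g (no commutativity assumed).\<close>

definition normalized_2cocycle :: "('g::group_add \<Rightarrow> 'g \<Rightarrow> complex) \<Rightarrow> bool" where
  "normalized_2cocycle \<sigma> \<longleftrightarrow>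
     (\<forall>g h. cmod (\<sigma> g h) = 1) \<and>
     (\<forall>g h k. \<sigma> g h * \<sigma> (g + h) k = \<sigma> h k * \<sigma> g (h + k)) \<and>
     (\<forall>g. \<sigma> g 0 = 1 \<and> \<sigma> 0 g = 1)"

definition ell2 :: "('g \<Rightarrow> complex) set" where
  "ell2 = {\<xi>. (\<lambda>h. (cmod (\<xi> h))^2) summable_on UNIV}"

definition ell2_norm :: "('g \<Rightarrow> complex) \<Rightarrow> real" where
  "ell2_norm \<xi> = sqrt (\<Sum>\<^sub>\<infinity>h. (cmod (\<xi> h))^2)"

definition fin_supp :: "('g \<Rightarrow> complex) set" where
  "fin_supp = {f. finite {g. f g \<noteq> 0}}"

definition Lambda_tw :: "('g::group_add \<Rightarrow> 'g \<Rightarrow> complex) \<Rightarrow> 'g \<Rightarrow> ('g \<Rightarrow> complex) \<Rightarrow> ('g \<Rightarrow> complex)" where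
  "Lambda_tw \<sigma> g \<xi> = (\<lambda>h. \<sigma> g (- g + h) * \<xi> (- g + h))"

definition pi_tw :: "('g::group_add \<Rightarrow> 'g \<Rightarrow> complex) \<Rightarrow> ('g \<Rightarrow> complex) \<Rightarrow> ('g \<Rightarrow> complex) \<Rightarrow> ('g \<Rightarrow> complex)" where
  "pi_tw \<sigma> f \<xi> = (\<lambda>h. \<Sum>g\<in>{g. f g \<noteq> 0}. f g * Lambda_tw \<sigma> g \<xi> h)"

definition restr :: "('g \<Rightarrow> complex) \<Rightarrow> 'g set \<Rightarrow> ('g \<Rightarrow> complex)" where
  "restr \<xi> F = (\<lambda>h. if h \<in> F then \<xi> h else 0)"

definition linear_subspace :: "('g \<Rightarrow> complex) set \<Rightarrow> bool" where
  "linear_subspace L \<longleftrightarrow> (\<lambda>_. 0) \<in> L \<and> (\<forall>x\<in>L. \<forall>y\<in>L. (\<lambda>h. x h + y h) \<in> L)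
     \<and> (\<forall>c. \<forall>x\<in>L. (\<lambda>h. c * x h) \<in> L)"

definition norm_on :: "('g \<Rightarrow> complex) set \<Rightarrow> (('g \<Rightarrow> complex) \<Rightarrow> real) \<Rightarrow> bool" where
  "norm_on L N \<longleftrightarrow>
     (\<forall>x\<in>L. N x \<ge> 0) \<and> (\<forall>x\<in>L. N x = 0 \<longleftrightarrow> x = (\<lambda>_. 0)) \<and>
     (\<forall>c. \<forall>x\<in>L. N (\<lambda>h. c * x h) = cmod c * N x) \<and>
     (\<forall>x\<in>L. \<forall>y\<in>L. N (\<lambda>h. x h + y h) \<le> N x + N y)"

definition tends_to_zero_at_infinity :: "(('g \<Rightarrow> complex) \<Rightarrow> real) \<Rightarrow> ('g \<Rightarrow> complex) \<Rightarrow> bool" where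
  "tends_to_zero_at_infinity N \<xi> \<longleftrightarrow>
     (\<forall>\<epsilon>>0. \<exists>F0. finite F0 \<and> (\<forall>F. finite F \<and> F \<inter> F0 = {} \<longrightarrow> N (restr \<xi> F) < \<epsilon>))"

text \<open>Boundedness of f |-> pi_sigma(f) into operator norm on B(l^2(G)):
  ||pi_sigma(f) xi||_2 <= C ||f||' ||xi||_2 for all xi in l^2(G).\<close>
definition decay_property :: "('g::group_add \<Rightarrow> 'g \<Rightarrow> complex) \<Rightarrow> ('g \<Rightarrow> complex) set \<Rightarrow> (('g \<Rightarrow> complex) \<Rightarrow> real) \<Rightarrow> bool" where
  "decay_property \<sigma> L N \<longleftrightarrow>
     (\<forall>\<xi>\<in>L. tends_to_zero_at_infinity N \<xi>) \<and>
     (\<exists>C. \<forall>f\<in>fin_supp. \<forall>\<xi>\<in>ell2. ell2_norm (pi_tw \<sigma> f \<xi>) \<le> C * N f * ell2_norm \<xi>)"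

end

theory Submission
  imports Defs
begin

lemma summable_on_finsum:
  fixes F :: "'b \<Rightarrow> 'a \<Rightarrow> real"
  assumes "finite S" "\<And>g. g \<in> S \<Longrightarrow> F g summable_on A"
  shows "(\<lambda>h. \<Sum>g\<in>S. F g h) summable_on A"
  using assms
proof (induction S rule: finite_induct)
  case empty then show ?case by simp
next
  case (insert x S)
  then show ?case by (simp add: summable_on_add)
qed

lemma ell2_shift:
  fixes \<xi> :: "'g::group_add \<Rightarrow> complex"
  assumes "\<xi> \<in> ell2"
  shows "(\<lambda>h. (cmod (\<xi> (- g + h)))^2) summable_on UNIV"
proof -
  have b: "bij_betw (\<lambda>h. - g + h) UNIV UNIV"
    by (rule bij_betwI[where g="\<lambda>h. g + h"]) (auto simp: add.assoc[symmetric])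
  show ?thesis
    using summable_on_reindex_bij_betw[OF b, of "\<lambda>h. (cmod (\<xi> h))^2"] assms
    by (simp add: ell2_def)
qed

theorem proposition3p3:
  fixes L :: "('g::group_add \<Rightarrow> complex) set" and N :: "('g \<Rightarrow> complex) \<Rightarrow> real"
    and \<sigma> :: "'g \<Rightarrow> 'g \<Rightarrow> complex"
  assumes "linear_subspace L" and "L \<subseteq> ell2" and "fin_supp \<subseteq> L"
    and "norm_on L N"
    and "\<forall>f\<in>fin_supp. N (\<lambda>h. complex_of_real (cmod (f h))) = N f"
    and "decay_property (\<lambda>_ _. 1) L N"
    and "normalized_2cocycle \<sigma>"
  shows "decay_property \<sigma> L N"
proof -
  from assms(6) obtain C where
    C: "\<forall>f\<in>fin_supp. \<forall>\<xi>\<in>ell2. ell2_norm (pi_tw (\<lambda>_ _. 1) f \<xi>) \<le> C * N f * ell2_norm \<xi>"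
    and tz: "\<forall>\<xi>\<in>L. tends_to_zero_at_infinity N \<xi>"
    unfolding decay_property_def by blast
  have s1: "cmod (\<sigma> g h) = 1" for g h using assms(7) unfolding normalized_2cocycle_def by blast
  have main: "ell2_norm (pi_tw \<sigma> f \<xi>) \<le> C * N f * ell2_norm \<xi>"
    if f: "f \<in> fin_supp" and xi: "\<xi> \<in> ell2" for f \<xi>
  proof -
    define S where "S = {g. f g \<noteq> 0}"
    have finS: "finite S" using f by (simp add: fin_supp_def S_def)
    define f' where "f' = (\<lambda>h. complex_of_real (cmod (f h)))"
    define \<xi>' where "\<xi>' = (\<lambda>h. complex_of_real (cmod (\<xi> h)))"
    have S': "{g. f' g \<noteq> 0} = S" by (simp add: f'_def S_def)
    have f'fs: "f' \<in> fin_supp" using finS S' by (simp add: fin_supp_def)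
    have xi'2: "\<xi>' \<in> ell2" using xi by (simp add: ell2_def \<xi>'_def)
    have nxi: "ell2_norm \<xi>' = ell2_norm \<xi>" by (simp add: ell2_norm_def \<xi>'_def)
    have Nf: "N f' = N f" using assms(5) f by (simp add: f'_def)
    define Q where "Q = (\<lambda>h. \<Sum>g\<in>S. cmod (f g) * cmod (\<xi> (- g + h)))"
    have Qnn: "Q h \<ge> 0" for h unfolding Q_def by (intro sum_nonneg) auto
    have Qeq: "cmod (pi_tw (\<lambda>_ _. 1) f' \<xi>' h) = Q h" for h
    proof -
      have "pi_tw (\<lambda>_ _. 1) f' \<xi>' h = complex_of_real (Q h)"
        unfolding pi_tw_def S' Lambda_tw_def Q_def by (simp add: f'_def \<xi>'_def)
      then show ?thesis using Qnn by simp
    qed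
    have Ple: "cmod (pi_tw \<sigma> f \<xi> h) \<le> Q h" for h
    proof -
      have "cmod (pi_tw \<sigma> f \<xi> h) \<le> (\<Sum>g\<in>S. cmod (f g * Lambda_tw \<sigma> g \<xi> h))"
        unfolding pi_tw_def S_def[symmetric] by (rule norm_sum)
      also have "\<dots> = Q h"
        unfolding Q_def Lambda_tw_def by (simp add: norm_mult s1)
      finally show ?thesis .
    qed
    have Q2: "(\<lambda>h. (Q h)^2) summable_on UNIV"
    proof (rule summable_on_comparison_test)
      show "(\<lambda>h. (\<Sum>g\<in>S. (cmod (f g))^2 * (cmod (\<xi> (- g + h)))^2) * real (card S)) summable_on UNIV"
        by (intro summable_on_cmult_left summable_on_finsum finS summable_on_cmult_right ell2_shift xi)
      show "(Q h)^2 \<le> (\<Sum>g\<in>S. (cmod (f g))^2 * (cmod (\<xi> (- g + h)))^2) * real (card S)" for h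
        using sum_squared_le_sum_of_squares[of "\<lambda>g. cmod (f g) * cmod (\<xi> (- g + h))" S]
        by (simp add: Q_def power_mult_distrib)
    qed auto
    have P2: "(\<lambda>h. (cmod (pi_tw \<sigma> f \<xi> h))^2) summable_on UNIV"
      by (rule summable_on_comparison_test[OF Q2]) (auto intro: power_mono Ple)
    have "ell2_norm (pi_tw \<sigma> f \<xi>) \<le> ell2_norm (pi_tw (\<lambda>_ _. 1) f' \<xi>')"
      unfolding ell2_norm_def Qeq
      by (intro real_sqrt_le_mono infsum_mono P2 Q2 power_mono Ple) auto
    also have "\<dots> \<le> C * N f * ell2_norm \<xi>"
      using C f'fs xi'2 nxi Nf by metis
    finally show ?thesis .
  qed
  show ?thesis unfolding decay_property_def using tz main by blast
qed

end
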